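(* Let $A$ be a ${\mathbb K}$-algebra and let $R=A[X_1,\ldots,X_m]$ be the polynomial algebra over $A$ in $m$ commuting (central) variables. Then $$\operatorname{Z}(R)=\operatorname{Z}(A)[X_1,\ldots,X_m]\cong \operatorname{Z}(A)\otimes_{{\mathbb K}}{\mathbb K}[X_1,\ldots,X_m].$$ Assume in addition that $A$ is finitely generated as a ${\mathbb K}$-algebra and that $\operatorname{Der}(A)=\operatorname{InnDer}(A)\oplus M$ for some $\operatorname{Z}(A)$-submodule $M$ of $\operatorname{Der}(A)$. Then $$\operatorname{Der}(R)=\operatorname{InnDer}(R)\oplus \overline{M}\oplus\bigoplus_{j=1}^m \operatorname{Z}(R)\,\partial_j,$$ where each $D\in M$ is extended to a derivation of $R$ by setting $D(X_i)=0$ for all $i\in[1,m]$, $\overline M=\operatorname{Z}(R)M$ (so $\overline M\cong \operatorname{Z}(R)\otimes_{\operatorname{Z}(A)}M\cong {\mathbb K}[X_1,\ldots,X_m]\otimes_{{\mathbb K}}M$), and $\partial_j$ is the derivation of $R$ with $\partial_j(A)=0$ and $\partial_j(X_i)=\delta_{ij}$ for all $i,j\in[1,m]$.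
   Context: ${\mathbb K}$ is a field of characteristic $0$; all derivations are ${\mathbb K}$-linear. For a ${\mathbb K}$-algebra $B$, $\operatorname{Z}(B)$ is its center, $\operatorname{Der}(B)$ its Lie algebra of ${\mathbb K}$-derivations and $\operatorname{InnDer}(B)=\{\operatorname{ad}_x: x\in B\}$ its inner derivations, where $\operatorname{ad}_x(b)=xb-bx$. *)

theory Defs
  imports "HOL-Library.Poly_Mapping"
begin

definition center :: "'a::ring set" where
  "center = {z. \<forall>b. z * b = b * z}"

definition K_algebra :: "('k::field \<Rightarrow> 'a::ring_1 \<Rightarrow> 'a) \<Rightarrow> bool" where
  "K_algebra sc \<longleftrightarrow>
     (\<forall>c x y. sc c (x + y) = sc c x + sc c y) \<and>
     (\<forall>c d x. sc (c + d) x = sc c x + sc d x) \<and>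
     (\<forall>c d x. sc (c * d) x = sc c (sc d x)) \<and>
     (\<forall>x. sc 1 x = x) \<and>
     (\<forall>c x y. sc c (x * y) = sc c x * y \<and> sc c (x * y) = x * sc c y)"

definition derivations :: "('k \<Rightarrow> 'a::ring \<Rightarrow> 'a) \<Rightarrow> ('a \<Rightarrow> 'a) set" where
  "derivations sc = {D. (\<forall>x y. D (x + y) = D x + D y) \<and>
                        (\<forall>c x. D (sc c x) = sc c (D x)) \<and>
                        (\<forall>x y. D (x * y) = D x * y + x * D y)}"

definition ad :: "'a::ring \<Rightarrow> 'a \<Rightarrow> 'a" where
  "ad x = (\<lambda>b. x * b - b * x)"

definition inner_derivations :: "('a::ring \<Rightarrow> 'a) set" where
  "inner_derivations = range ad"

inductive_set subalg_gen :: "('k::field \<Rightarrow> 'a::ring_1 \<Rightarrow> 'a) \<Rightarrow> 'a set \<Rightarrow> 'a set"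
  for sc S where
  gen: "s \<in> S \<Longrightarrow> s \<in> subalg_gen sc S"
| one: "1 \<in> subalg_gen sc S"
| scal: "x \<in> subalg_gen sc S \<Longrightarrow> sc c x \<in> subalg_gen sc S"
| add: "x \<in> subalg_gen sc S \<Longrightarrow> y \<in> subalg_gen sc S \<Longrightarrow> x + y \<in> subalg_gen sc S"
| mult: "x \<in> subalg_gen sc S \<Longrightarrow> y \<in> subalg_gen sc S \<Longrightarrow> x * y \<in> subalg_gen sc S"

definition finitely_generated_algebra :: "('k::field \<Rightarrow> 'a::ring_1 \<Rightarrow> 'a) \<Rightarrow> bool" where
  "finitely_generated_algebra sc \<longleftrightarrow> (\<exists>S. finite S \<and> subalg_gen sc S = UNIV)"

definition center_submodule_of_derivations ::
  "('k \<Rightarrow> 'a::ring \<Rightarrow> 'a) \<Rightarrow> ('a \<Rightarrow> 'a) set \<Rightarrow> bool" where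
  "center_submodule_of_derivations sc M \<longleftrightarrow>
     M \<subseteq> derivations sc \<and> (\<lambda>x. 0) \<in> M \<and>
     (\<forall>D\<in>M. \<forall>E\<in>M. (\<lambda>x. D x + E x) \<in> M) \<and>
     (\<forall>z\<in>center. \<forall>D\<in>M. (\<lambda>x. z * D x) \<in> M)"

text \<open>The polynomial algebra A[X_j : j \<in> 'n] with central commuting variables:
  finitely supported maps from monomials (exponent vectors) to coefficients,
  with convolution product.\<close>
type_synonym ('n, 'a) mpoly = "('n \<Rightarrow>\<^sub>0 nat) \<Rightarrow>\<^sub>0 'a"

definition var :: "'n \<Rightarrow> ('n, 'a::ring_1) mpoly" where
  "var i = Poly_Mapping.single (Poly_Mapping.single i 1) 1"

definition poly_scal :: "('k \<Rightarrow> 'a::zero \<Rightarrow> 'a) \<Rightarrow> 'k \<Rightarrow> ('n, 'a) mpoly \<Rightarrow> ('n, 'a) mpoly" where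
  "poly_scal sc c p = Poly_Mapping.map (sc c) p"

text \<open>Extension of a derivation D of A to R with D(X_i) = 0: apply D coefficientwise.\<close>
definition coeff_ext :: "('a::zero \<Rightarrow> 'a) \<Rightarrow> ('n, 'a) mpoly \<Rightarrow> ('n, 'a) mpoly" where
  "coeff_ext D p = Poly_Mapping.map D p"

text \<open>Partial derivative with respect to X_j (kills A, sends X_i to delta_ij).\<close>
definition partial_var :: "'n \<Rightarrow> ('n, 'a::ring_1) mpoly \<Rightarrow> ('n, 'a) mpoly" where
  "partial_var j p =
     (\<Sum>(mm::'n \<Rightarrow>\<^sub>0 nat)\<in>Poly_Mapping.keys p. Poly_Mapping.single (mm - Poly_Mapping.single j 1)
                    (of_nat (Poly_Mapping.lookup mm j) * Poly_Mapping.lookup p mm))"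

text \<open>\<open>Mbar = Z(R) M\<close>: the Z(R)-span of the extensions of the elements of M.\<close>
definition ext_span :: "('a::ring_1 \<Rightarrow> 'a) set \<Rightarrow> (('n, 'a) mpoly \<Rightarrow> ('n, 'a) mpoly) set" where
  "ext_span M = {(\<lambda>p. \<Sum>k<(n::nat). (z :: nat \<Rightarrow> ('n, 'a) mpoly) k * coeff_ext (Ds k) p) | n z Ds.
                   \<forall>k<n. z k \<in> center \<and> Ds k \<in> M}"

end

theory Submission
  imports Defs
begin

definition additive :: "('b::ab_group_add \<Rightarrow> 'c::ab_group_add) \<Rightarrow> bool" where
  "additive f \<longleftrightarrow> (\<forall>x y. f (x + y) = f x + f y)"

lemma additive_zero: "additive f \<Longrightarrow> f 0 = 0"
  unfolding additive_def by (drule spec[of _ 0], drule spec[of _ 0]) simp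

lemma additive_sum: "additive f \<Longrightarrow> f (sum g S) = (\<Sum>i\<in>S. f (g i))"
proof (induction S rule: infinite_finite_induct)
  case (insert x F)
  then show ?case unfolding additive_def by simp
qed (auto simp: additive_zero)

lemma additive_minus: "additive f \<Longrightarrow> f (- x) = - f x"
proof -
  assume a: "additive f"
  have "f (- x + x) = f (- x) + f x" using a unfolding additive_def by blast
  then have "f (- x) + f x = 0" using additive_zero[OF a] by simp
  then show ?thesis by (simp add: eq_neg_iff_add_eq_0)
qed

lemma additive_diff: "additive f \<Longrightarrow> f (x - y) = f x - f y"
proof -
  assume a: "additive f"
  have "f (x + - y) = f x + f (- y)" using a unfolding additive_def by blast
  then show ?thesis using additive_minus[OF a] by simp
qed

lemma lookup_map0: "f 0 = 0 \<Longrightarrow> Poly_Mapping.lookup (Poly_Mapping.map f p) k = f (Poly_Mapping.lookup p k)"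
  by (simp add: Poly_Mapping.map.rep_eq when_def)

lemma sum_single_superset:
  fixes p :: "'b \<Rightarrow>\<^sub>0 'a::comm_monoid_add"
  assumes "finite S" "Poly_Mapping.keys p \<subseteq> S"
  shows "p = (\<Sum>\<mu>\<in>S. Poly_Mapping.single \<mu> (Poly_Mapping.lookup p \<mu>))"
proof (rule poly_mapping_eqI)
  fix k
  have "(\<Sum>\<mu>\<in>S. Poly_Mapping.lookup (Poly_Mapping.single \<mu> (Poly_Mapping.lookup p \<mu>)) k)
      = (\<Sum>\<mu>\<in>S. if \<mu> = k then Poly_Mapping.lookup p \<mu> else 0)"
    by (rule sum.cong) (auto simp: lookup_single when_def)
  also have "\<dots> = Poly_Mapping.lookup p k"
    using assms by (auto simp: in_keys_iff)
  finally show "Poly_Mapping.lookup p k = Poly_Mapping.lookup (\<Sum>\<mu>\<in>S. Poly_Mapping.single \<mu> (Poly_Mapping.lookup p \<mu>)) k"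
    by (simp add: lookup_sum)
qed

lemma sum_single: "p = (\<Sum>\<mu>\<in>Poly_Mapping.keys p. Poly_Mapping.single \<mu> (Poly_Mapping.lookup p \<mu>))"
  by (rule sum_single_superset) auto

lemma additive_ext:
  fixes f g :: "('b \<Rightarrow>\<^sub>0 'a::ab_group_add) \<Rightarrow> 'c::ab_group_add"
  assumes "additive f" "additive g" "\<And>m a. f (Poly_Mapping.single m a) = g (Poly_Mapping.single m a)"
  shows "f = g"
proof
  fix p
  have "f p = f (\<Sum>\<mu>\<in>Poly_Mapping.keys p. Poly_Mapping.single \<mu> (Poly_Mapping.lookup p \<mu>))"
    by (subst sum_single[of p]) simp
  also have "\<dots> = (\<Sum>\<mu>\<in>Poly_Mapping.keys p. g (Poly_Mapping.single \<mu> (Poly_Mapping.lookup p \<mu>)))"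
    using assms by (simp add: additive_sum)
  also have "\<dots> = g p"
    using assms by (subst (2) sum_single[of p]) (simp add: additive_sum)
  finally show "f p = g p" .
qed

lemma biadditive_ext:
  fixes F G :: "('b \<Rightarrow>\<^sub>0 'a::ab_group_add) \<Rightarrow> ('b \<Rightarrow>\<^sub>0 'a) \<Rightarrow> 'c::ab_group_add"
  assumes "\<And>q. additive (\<lambda>p. F p q)" "\<And>p. additive (F p)"
    "\<And>q. additive (\<lambda>p. G p q)" "\<And>p. additive (G p)"
    "\<And>m a n b. F (Poly_Mapping.single m a) (Poly_Mapping.single n b) = G (Poly_Mapping.single m a) (Poly_Mapping.single n b)"
  shows "F p q = G p q"
proof -
  have "\<And>n b. (\<lambda>p. F p (Poly_Mapping.single n b)) = (\<lambda>p. G p (Poly_Mapping.single n b))"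
    by (rule additive_ext) (use assms in auto)
  then have "F p = G p"
    by (intro additive_ext) (use assms in \<open>auto dest: fun_cong\<close>)
  then show ?thesis by simp
qed

lemma additive_mult_left: "additive (\<lambda>p. (p::'b::ring) * q)"
  by (simp add: additive_def distrib_right)
lemma additive_mult_right: "additive (\<lambda>q. (p::'b::ring) * q)"
  by (simp add: additive_def distrib_left)

lemma additive_map:
  assumes "\<And>x y. f (x + y) = f x + f y"
  shows "additive (Poly_Mapping.map f :: ('b \<Rightarrow>\<^sub>0 'a::ab_group_add) \<Rightarrow> _)"
proof -
  have f0: "f 0 = 0" using assms by (metis add_cancel_right_right add_0)
  show ?thesis unfolding additive_def
    by (auto intro!: poly_mapping_eqI simp: lookup_map0[where f=f, OF f0] lookup_add assms)
qed


lemma mult_single_right0: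
  "(p::('b::monoid_add \<Rightarrow>\<^sub>0 'a::ring_1)) * Poly_Mapping.single 0 a = Poly_Mapping.map (\<lambda>x. x * a) p"
proof -
  have "(\<lambda>p. p * Poly_Mapping.single 0 a) = (\<lambda>p::('b \<Rightarrow>\<^sub>0 'a). Poly_Mapping.map (\<lambda>x. x * a) p)"
    by (rule additive_ext) (auto simp: additive_mult_left additive_map distrib_right mult_single)
  then show ?thesis by (rule fun_cong)
qed

lemma lookup_mult_C_right: "Poly_Mapping.lookup ((p::('b::monoid_add \<Rightarrow>\<^sub>0 'a::ring_1)) * Poly_Mapping.single 0 a) \<mu> = Poly_Mapping.lookup p \<mu> * a"
  by (simp add: mult_single_right0 lookup_map0)

lemma lookup_mult_C_left: "Poly_Mapping.lookup (Poly_Mapping.single 0 a * (p::('b::monoid_add \<Rightarrow>\<^sub>0 'a::ring_1))) \<mu> = a * Poly_Mapping.lookup p \<mu>"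
  by (simp add: mult_map_scale_conv_mult[symmetric] lookup_map0)

lemma center_coeffI:
  assumes "\<And>a. p * Poly_Mapping.single 0 a = Poly_Mapping.single 0 a * (p::('b::monoid_add \<Rightarrow>\<^sub>0 'a::ring_1))"
  shows "Poly_Mapping.lookup p \<mu> \<in> center"
  unfolding center_def
proof (intro CollectI allI)
  fix a
  have "Poly_Mapping.lookup (p * Poly_Mapping.single 0 a) \<mu> = Poly_Mapping.lookup (Poly_Mapping.single 0 a * p) \<mu>"
    by (simp add: assms)
  then show "Poly_Mapping.lookup p \<mu> * a = a * Poly_Mapping.lookup p \<mu>"
    by (simp add: lookup_mult_C_left lookup_mult_C_right)
qed

lemma center_charI:
  fixes p :: "'b::comm_monoid_add \<Rightarrow>\<^sub>0 'a::ring_1"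
  assumes c: "\<And>\<mu>. Poly_Mapping.lookup p \<mu> \<in> center"
  shows "p \<in> center"
proof -
  define K where "K = Poly_Mapping.keys p"
  have e: "p = (\<Sum>\<mu>\<in>K. Poly_Mapping.single \<mu> (Poly_Mapping.lookup p \<mu>))"
    unfolding K_def by (rule sum_single)
  have "(\<lambda>q. p * q) = (\<lambda>q. q * p)"
  proof (rule additive_ext)
    show "additive ((*) p)" by (rule additive_mult_right)
    show "additive (\<lambda>q. q * p)" by (rule additive_mult_left)
    fix n b
    have "p * Poly_Mapping.single n b = (\<Sum>\<mu>\<in>K. Poly_Mapping.single \<mu> (Poly_Mapping.lookup p \<mu>)) * Poly_Mapping.single n b"
      using e by (rule arg_cong)
    also have "\<dots> = (\<Sum>\<mu>\<in>K. Poly_Mapping.single (\<mu> + n) (Poly_Mapping.lookup p \<mu> * b))"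
      by (simp add: sum_distrib_right mult_single)
    also have "\<dots> = (\<Sum>\<mu>\<in>K. Poly_Mapping.single (n + \<mu>) (b * Poly_Mapping.lookup p \<mu>))"
      using c by (intro sum.cong) (auto simp: center_def add.commute)
    also have "\<dots> = Poly_Mapping.single n b * (\<Sum>\<mu>\<in>K. Poly_Mapping.single \<mu> (Poly_Mapping.lookup p \<mu>))"
      by (simp add: sum_distrib_left mult_single)
    also have "\<dots> = Poly_Mapping.single n b * p"
      using e[symmetric] by (rule arg_cong)
    finally show "p * Poly_Mapping.single n b = Poly_Mapping.single n b * p" .
  qed
  then show ?thesis unfolding center_def by (auto dest: fun_cong)
qed

lemma center_char:
  "((p :: 'b::comm_monoid_add \<Rightarrow>\<^sub>0 'a::ring_1) \<in> center) = (\<forall>\<mu>. Poly_Mapping.lookup p \<mu> \<in> center)"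
  using center_charI center_coeffI unfolding center_def by blast

lemma center_C: "(\<forall>a. p * Poly_Mapping.single 0 a = Poly_Mapping.single 0 a * p) \<Longrightarrow>
   (p :: 'b::comm_monoid_add \<Rightarrow>\<^sub>0 'a::ring_1) \<in> center"
  using center_charI center_coeffI by blast

lemma Xm_center: "Poly_Mapping.single m (1::'a::ring_1) \<in> (center :: ('b::comm_monoid_add \<Rightarrow>\<^sub>0 'a) set)"
  by (rule center_charI) (auto simp: lookup_single when_def center_def)


lemma der_additive: "D \<in> derivations s \<Longrightarrow> additive D"
  unfolding derivations_def additive_def by blast

lemma der_one: "D \<in> derivations s \<Longrightarrow> D (1::'a::ring_1) = 0"
proof -
  assume "D \<in> derivations s"
  then have "D (1 * 1) = D 1 * 1 + 1 * D 1" unfolding derivations_def by blast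
  then show ?thesis by simp
qed

locale kalg =
  fixes sc :: "'k::field \<Rightarrow> 'a::ring_1 \<Rightarrow> 'a"
  assumes alg: "K_algebra sc"
begin

lemma sc_add: "sc c (x+y) = sc c x + sc c y"
  using alg unfolding K_algebra_def by blast
lemma sc_multl: "sc c (x*y) = sc c x * y"
  using alg unfolding K_algebra_def by blast
lemma sc_multr: "sc c (x*y) = x * sc c y"
  using alg unfolding K_algebra_def by blast
lemma sc_additive: "additive (sc c)"
  unfolding additive_def by (simp add: sc_add)
lemma sc_zero[simp]: "sc c 0 = 0"
  by (rule additive_zero[OF sc_additive])

lemma poly_scal_additive: "additive (poly_scal sc c :: ('n, 'a) mpoly \<Rightarrow> _)"
  unfolding poly_scal_def by (rule additive_map) (simp add: sc_add)

lemma poly_scal_single[simp]: "poly_scal sc c (Poly_Mapping.single m a) = Poly_Mapping.single m (sc c a)"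
  unfolding poly_scal_def by simp

lemma poly_scal_multl: "poly_scal sc c ((p::('n, 'a) mpoly) * q) = poly_scal sc c p * q"
  by (rule biadditive_ext[where F="\<lambda>p q. poly_scal sc c (p * q)" and G="\<lambda>p q. poly_scal sc c p * q"])
     (auto simp: additive_def poly_scal_additive[unfolded additive_def] distrib_left distrib_right
        mult_single sc_multl)

lemma poly_scal_multr: "poly_scal sc c ((p::('n, 'a) mpoly) * q) = p * poly_scal sc c q"
  by (rule biadditive_ext[where F="\<lambda>p q. poly_scal sc c (p * q)" and G="\<lambda>p q. p * poly_scal sc c q"])
     (auto simp: additive_def poly_scal_additive[unfolded additive_def] distrib_left distrib_right
        mult_single sc_multr)

abbreviation DerR :: "((('n \<Rightarrow>\<^sub>0 nat) \<Rightarrow>\<^sub>0 'a) \<Rightarrow> (('n \<Rightarrow>\<^sub>0 nat) \<Rightarrow>\<^sub>0 'a)) set" where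
  "DerR \<equiv> derivations (poly_scal sc)"

lemma derI:
  assumes "additive D" "\<And>c x. D (poly_scal sc c x) = poly_scal sc c (D x)"
    "\<And>x y. D (x * y) = D x * y + x * D y"
  shows "D \<in> DerR"
  using assms unfolding derivations_def additive_def by blast

lemma derD:
  assumes "D \<in> DerR"
  shows "additive D" "D (poly_scal sc c x) = poly_scal sc c (D x)" "D (x * y) = D x * y + x * D y"
  using assms unfolding derivations_def additive_def by blast+

lemma der_zero: "(\<lambda>p. 0) \<in> DerR"
  by (rule derI) (auto simp: additive_def additive_zero[OF poly_scal_additive])

lemma der_add: "D \<in> DerR \<Longrightarrow> E \<in> DerR \<Longrightarrow> (\<lambda>p. D p + E p) \<in> DerR"
  by (rule derI) (auto simp: additive_def derD[unfolded additive_def] 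
     poly_scal_additive[unfolded additive_def] algebra_simps)

lemma der_diff: "D \<in> DerR \<Longrightarrow> E \<in> DerR \<Longrightarrow> (\<lambda>p. D p - E p) \<in> DerR"
  by (rule derI) (auto simp: additive_def derD[unfolded additive_def] 
     additive_diff[OF poly_scal_additive] algebra_simps)

lemma der_cmult: "z \<in> center \<Longrightarrow> D \<in> DerR \<Longrightarrow> (\<lambda>p. z * D p) \<in> DerR"
proof (rule derI)
  assume z: "z \<in> center" and D: "D \<in> DerR"
  show "additive (\<lambda>p. z * D p)" using derD(1)[OF D] by (simp add: additive_def distrib_left)
  show "z * D (poly_scal sc c x) = poly_scal sc c (z * D x)" for c x
    by (simp add: derD(2)[OF D] poly_scal_multr)
  show "z * D (x * y) = z * D x * y + x * (z * D y)" for x y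
  proof -
    have zx: "z * x = x * z" using z by (simp add: center_def)
    show ?thesis by (simp add: derD(3)[OF D] distrib_left mult.assoc[symmetric] zx)
  qed
qed

lemma der_sum: "(\<And>i. i \<in> S \<Longrightarrow> D i \<in> DerR) \<Longrightarrow> (\<lambda>p. \<Sum>i\<in>S. D i p) \<in> DerR"
proof (induction S rule: infinite_finite_induct)
  case (infinite S) then show ?case by (simp add: der_zero)
next
  case empty then show ?case by (simp add: der_zero)
next
  case (insert x F)
  then show ?case using der_add[of "D x" "\<lambda>p. \<Sum>i\<in>F. D i p"] by simp
qed

lemma der_ad: "ad x \<in> DerR"
proof (rule derI)
  show "additive (ad x)" by (simp add: additive_def ad_def algebra_simps)
  show "ad x (poly_scal sc c p) = poly_scal sc c (ad x p)" for c p
    unfolding ad_def additive_diff[OF poly_scal_additive]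
    by (simp add: poly_scal_multl[of c p x] poly_scal_multr[of c x p])
  show "ad x (p * q) = ad x p * q + p * ad x q" for p q
    by (simp add: ad_def algebra_simps)
qed

end


lemma pv_superset:
  assumes "finite S" "Poly_Mapping.keys p \<subseteq> S"
  shows "partial_var j (p::('n,'a::ring_1) mpoly) = (\<Sum>mm\<in>S. Poly_Mapping.single (mm - Poly_Mapping.single j 1)
                    (of_nat (Poly_Mapping.lookup mm j) * Poly_Mapping.lookup p mm))"
  unfolding partial_var_def
  by (rule sum.mono_neutral_left) (use assms in \<open>auto simp: in_keys_iff\<close>)

lemma pv_additive: "additive (partial_var j :: ('n,'a::ring_1) mpoly \<Rightarrow> _)"
  unfolding additive_def
proof (intro allI)
  fix p q :: "('n,'a) mpoly"
  let ?S = "Poly_Mapping.keys p \<union> Poly_Mapping.keys q"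
  have k: "Poly_Mapping.keys (p + q) \<subseteq> ?S" by (rule keys_add)
  show "partial_var j (p + q) = partial_var j p + partial_var j q"
    by (simp add: pv_superset[of ?S] k lookup_add distrib_left single_add sum.distrib)
qed

lemma pv_single: "partial_var j (Poly_Mapping.single m a :: ('n,'a::ring_1) mpoly)
  = Poly_Mapping.single (m - Poly_Mapping.single j 1) (of_nat (Poly_Mapping.lookup m j) * a)"
  by (subst pv_superset[of "{m}"]) auto

lemma nat_map_shift:
  fixes m n :: "'n \<Rightarrow>\<^sub>0 nat"
  assumes "Poly_Mapping.lookup m j \<noteq> 0"
  shows "m - Poly_Mapping.single j 1 + n = m + n - Poly_Mapping.single j 1"
  using assms by (intro poly_mapping_eqI) (auto simp: lookup_add lookup_minus lookup_single when_def)

lemma single_shift: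
  "Poly_Mapping.single (m - Poly_Mapping.single j 1 + n) (of_nat (Poly_Mapping.lookup m j) * c)
   = Poly_Mapping.single (m + n - Poly_Mapping.single j 1) (of_nat (Poly_Mapping.lookup (m::'n \<Rightarrow>\<^sub>0 nat) j) * (c::'a::ring_1))"
proof (cases "Poly_Mapping.lookup m j = 0")
  case False
  show ?thesis by (simp only: nat_map_shift[OF False])
qed simp

lemma of_nat_mid: "a * (of_nat k * b) = of_nat k * (a * (b::'a::ring_1))"
proof -
  have "of_nat k * (a * b) = (of_nat k * a) * b" by (simp add: mult.assoc)
  also have "\<dots> = (a * of_nat k) * b" by (rule arg_cong[where f="\<lambda>x. x * b"], rule mult_of_nat_commute)
  also have "\<dots> = a * (of_nat k * b)" by (simp add: mult.assoc)
  finally show ?thesis by simp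
qed

lemma pv_leibniz_single:
  "partial_var j (Poly_Mapping.single m a * Poly_Mapping.single n b :: ('n,'a::ring_1) mpoly)
   = partial_var j (Poly_Mapping.single m a) * Poly_Mapping.single n b + Poly_Mapping.single m a * partial_var j (Poly_Mapping.single n b)"
proof -
  have 1: "partial_var j (Poly_Mapping.single m a) * Poly_Mapping.single n b
     = Poly_Mapping.single (m + n - Poly_Mapping.single j 1) (of_nat (Poly_Mapping.lookup m j) * (a * b))"
    using single_shift[of m j n "a * b"] by (simp add: pv_single mult_single mult.assoc)
  have 2: "Poly_Mapping.single m a * partial_var j (Poly_Mapping.single n b)
     = Poly_Mapping.single (m + n - Poly_Mapping.single j 1) (of_nat (Poly_Mapping.lookup n j) * (a * b))"
  proof -
    have c1: "m + (n - Poly_Mapping.single j 1) = n - Poly_Mapping.single j 1 + m" "n + m = m + n"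
      by (simp_all add: add.commute)
    show ?thesis
      by (simp only: pv_single mult_single of_nat_mid c1 single_shift)
  qed
  show ?thesis
    unfolding 1 2 by (simp add: pv_single mult_single lookup_add single_add[symmetric] distrib_right)
qed

lemma pv_leibniz: "partial_var j ((p::('n,'a::ring_1) mpoly) * q) = partial_var j p * q + p * partial_var j q"
  by (rule biadditive_ext[where F="\<lambda>p q. partial_var j (p * q)" and G="\<lambda>p q. partial_var j p * q + p * partial_var j q"])
     (auto simp: additive_def pv_additive[unfolded additive_def] distrib_left distrib_right
        pv_leibniz_single algebra_simps)

lemma pv_var: "partial_var j (var k :: ('n,'a::ring_1) mpoly) = (if j = k then 1 else 0)"
  by (auto simp: var_def pv_single lookup_single when_def)

lemma coeff_ext_single: "D 0 = 0 \<Longrightarrow> coeff_ext D (Poly_Mapping.single m a) = Poly_Mapping.single m (D a)"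
  unfolding coeff_ext_def by simp

context kalg
begin

lemma der_pv: "partial_var j \<in> DerR"
proof (rule derI)
  show "additive (partial_var j)" by (rule pv_additive)
  show "partial_var j (p * q) = partial_var j p * q + p * partial_var j q" for p q by (rule pv_leibniz)
  fix c p
  have "(\<lambda>p. partial_var j (poly_scal sc c p)) = (\<lambda>p. poly_scal sc c (partial_var j p))"
  proof (rule additive_ext)
    show "additive (\<lambda>p. partial_var j (poly_scal sc c p))"
      by (simp add: additive_def pv_additive[unfolded additive_def] poly_scal_additive[unfolded additive_def])
    show "additive (\<lambda>p. poly_scal sc c (partial_var j p))"
      by (simp add: additive_def pv_additive[unfolded additive_def] poly_scal_additive[unfolded additive_def])
    show "partial_var j (poly_scal sc c (Poly_Mapping.single m a)) = poly_scal sc c (partial_var j (Poly_Mapping.single m a))" for m a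
      by (simp add: pv_single sc_multr)
  qed
  then show "partial_var j (poly_scal sc c p) = poly_scal sc c (partial_var j p)" by (rule fun_cong)
qed

lemma der_coeff_ext:
  assumes D: "D \<in> derivations sc"
  shows "coeff_ext D \<in> DerR"
proof -
  have D0: "D 0 = 0" by (rule additive_zero[OF der_additive[OF D]])
  have Da: "D (x + y) = D x + D y" "D (sc c x) = sc c (D x)" "D (x * y) = D x * y + x * D y" for x y c
    using D unfolding derivations_def by blast+
  have add: "additive (coeff_ext D :: ('n, 'a) mpoly \<Rightarrow> _)"
    unfolding coeff_ext_def by (rule additive_map) (simp add: Da)
  show ?thesis
  proof (rule derI)
    show "additive (coeff_ext D)" by (rule add)
    show "coeff_ext D (p * q) = coeff_ext D p * q + p * coeff_ext D q" for p q
      by (rule biadditive_ext[where F="\<lambda>p q. coeff_ext D (p * q)" and G="\<lambda>p q. coeff_ext D p * q + p * coeff_ext D q"])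
        (auto simp: additive_def add[unfolded additive_def] distrib_left distrib_right
        mult_single coeff_ext_single D0 Da single_add algebra_simps)
    fix c p
    have "(\<lambda>p. coeff_ext D (poly_scal sc c p)) = (\<lambda>p. poly_scal sc c (coeff_ext D p))"
    proof (rule additive_ext)
      show "additive (\<lambda>p. coeff_ext D (poly_scal sc c p))"
        by (simp add: additive_def add[unfolded additive_def] poly_scal_additive[unfolded additive_def])
      show "additive (\<lambda>p. poly_scal sc c (coeff_ext D p))"
        by (simp add: additive_def add[unfolded additive_def] poly_scal_additive[unfolded additive_def])
      show "coeff_ext D (poly_scal sc c (Poly_Mapping.single m a)) = poly_scal sc c (coeff_ext D (Poly_Mapping.single m a))" for m a
        by (simp add: coeff_ext_single D0 Da)
    qed
    then show "coeff_ext D (poly_scal sc c p) = poly_scal sc c (coeff_ext D p)" by (rule fun_cong)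
  qed
qed

lemma der_kills_Xm:
  assumes D: "D \<in> DerR" and v: "\<And>j. D (var j) = 0"
  shows "D (Poly_Mapping.single m 1) = 0"
proof (induction m rule: update_induct)
  case const
  then show ?case using der_one[OF D] by simp
next
  case (update f a b)
  have u: "Poly_Mapping.update a b f = f + Poly_Mapping.single a b"
    using update.hyps(1) by (intro poly_mapping_eqI) (auto simp: lookup_update lookup_add lookup_single when_def in_keys_iff)
  have s: "D (Poly_Mapping.single (Poly_Mapping.single a k) 1) = 0" for k
  proof (induction k)
    case 0 then show ?case using der_one[OF D] by simp
  next
    case (Suc k)
    have eq: "Poly_Mapping.single (Poly_Mapping.single a (Suc k)) 1 = Poly_Mapping.single (Poly_Mapping.single a k) 1 * var a"
      by (simp add: var_def mult_single single_add[symmetric])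
    show ?case unfolding eq derD(3)[OF D] by (simp add: Suc.IH v)
  qed
  have "Poly_Mapping.single (f + Poly_Mapping.single a b) 1 = Poly_Mapping.single f 1 * Poly_Mapping.single (Poly_Mapping.single a b) (1::'a)"
    by (simp add: mult_single)
  then show ?case using u update.IH s derD(3)[OF D] by simp
qed

lemma der_eq:
  fixes D E :: "('n,'a) mpoly \<Rightarrow> ('n,'a) mpoly"
  assumes D: "D \<in> DerR" and E: "E \<in> DerR" and vD: "\<And>j. D (var j) = 0" and vE: "\<And>j. E (var j) = 0"
    and C: "\<And>a. D (Poly_Mapping.single 0 a) = E (Poly_Mapping.single 0 a)"
  shows "D = E"
proof (rule additive_ext)
  show "additive D" "additive E" using derD(1) D E by blast+
  fix m :: "'n \<Rightarrow>\<^sub>0 nat" and a :: 'a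
  have e: "Poly_Mapping.single m a = Poly_Mapping.single 0 a * Poly_Mapping.single m (1::'a)"
    by (simp add: mult_single)
  show "D (Poly_Mapping.single m a) = E (Poly_Mapping.single m a)"
    by (subst (1 2) e) (simp add: derD(3)[OF D] derD(3)[OF E] der_kills_Xm[OF D vD] der_kills_Xm[OF E vE] C)
qed

end


lemma M_sum:
  assumes M: "center_submodule_of_derivations sc M"
  shows "(\<forall>k<(n::nat). c k \<in> center \<and> D k \<in> M) \<Longrightarrow> (\<lambda>a. \<Sum>k<n. c k * D k a) \<in> M"
proof (induction n)
  case 0 then show ?case using M unfolding center_submodule_of_derivations_def by simp
next
  case (Suc n)
  have a: "(\<lambda>a. \<Sum>k<n. c k * D k a) \<in> M" using Suc by simp
  have b: "(\<lambda>a. c n * D n a) \<in> M" using Suc.prems M unfolding center_submodule_of_derivations_def by blast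
  show ?case using M a b unfolding center_submodule_of_derivations_def by simp
qed

context kalg
begin

lemma der_vanish_gen:
  assumes D: "D \<in> derivations sc" and hS: "\<And>s. s \<in> S \<Longrightarrow> D s = 0"
    and hx: "x \<in> subalg_gen sc S"
  shows "D x = 0"
  using hx
proof (induct x rule: subalg_gen.induct)
  case (gen s) then show ?case using hS by simp
next
  case one then show ?case using der_one[OF D] .
next
  case (scal x c)
  have "D (sc c x) = sc c (D x)" using D unfolding derivations_def by blast
  then show ?case using scal by simp
next
  case (add x y)
  then show ?case using D unfolding derivations_def by simp
next
  case (mult x y)
  then show ?case using D unfolding derivations_def by simp
qed

lemma der_var_center:
  assumes D: "D \<in> DerR"
  shows "D (var j) \<in> center"
proof (rule center_C, intro allI)
  fix a
  have vc: "var j \<in> center" unfolding var_def by (rule Xm_center)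
  then have "var j * Poly_Mapping.single 0 a = Poly_Mapping.single 0 a * var j"
    "var j * D (Poly_Mapping.single 0 a) = D (Poly_Mapping.single 0 a) * var j"
    unfolding center_def by auto
  then have "D (var j) * Poly_Mapping.single 0 a + var j * D (Poly_Mapping.single 0 a)
      = D (Poly_Mapping.single 0 a) * var j + Poly_Mapping.single 0 a * D (var j)"
    using derD(3)[OF D] by metis
  then show "D (var j) * Poly_Mapping.single 0 a = Poly_Mapping.single 0 a * D (var j)"
    using \<open>var j * D (Poly_Mapping.single 0 a) = D (Poly_Mapping.single 0 a) * var j\<close>
    by (simp add: add.commute)
qed

lemma der_ext_span:
  fixes N :: "('n,'a) mpoly \<Rightarrow> ('n,'a) mpoly"
  assumes M: "M \<subseteq> derivations sc" and N: "N \<in> ext_span M"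
  shows "N \<in> DerR"
proof -
  obtain n and z :: "nat \<Rightarrow> ('n,'a) mpoly" and Ds where N: "N = (\<lambda>p. \<Sum>k<n. z k * coeff_ext (Ds k) p)" and c: "\<forall>k<n. z k \<in> center \<and> Ds k \<in> M"
    using N unfolding ext_span_def by auto
  show ?thesis unfolding N
    by (rule der_sum) (use c M in \<open>auto intro!: der_cmult der_coeff_ext\<close>)
qed

lemma main_sup:
  assumes M: "M \<subseteq> derivations sc" and I: "I \<in> inner_derivations" and N: "N \<in> ext_span M"
    and z: "\<forall>j. z j \<in> center"
  shows "(\<lambda>p. I p + N p + (\<Sum>j\<in>UNIV. z j * partial_var j p)) \<in> DerR"
proof -
  have "I \<in> DerR" using I der_ad unfolding inner_derivations_def by auto
  moreover have "N \<in> DerR" by (rule der_ext_span[OF M N])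
  moreover have "(\<lambda>p. \<Sum>j\<in>UNIV. z j * partial_var j p) \<in> DerR"
    by (rule der_sum) (use z in \<open>auto intro!: der_cmult der_pv\<close>)
  ultimately show ?thesis
    using der_add by blast
qed

end


context kalg
begin

lemma main_decomp:
  fixes \<delta> :: "('n::finite,'a) mpoly \<Rightarrow> ('n,'a) mpoly"
  assumes fg: "finitely_generated_algebra sc" and Msub: "M \<subseteq> derivations sc"
    and dec: "derivations sc = {(\<lambda>a. I a + N a) | I N. I \<in> inner_derivations \<and> N \<in> M}"
    and D: "\<delta> \<in> DerR"
  shows "\<exists>I N z. \<delta> = (\<lambda>p. I p + N p + (\<Sum>j\<in>(UNIV :: 'n set). z j * partial_var j p)) \<and>
              I \<in> inner_derivations \<and> N \<in> ext_span M \<and> (\<forall>j. z j \<in> center)"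
proof -
  define z where "z j = \<delta> (var j)" for j
  have zc: "\<forall>j. z j \<in> center" unfolding z_def using der_var_center[OF D] by blast
  define \<delta>1 where "\<delta>1 = (\<lambda>p. \<delta> p - (\<Sum>j\<in>UNIV. z j * partial_var j p))"
  have d1: "\<delta>1 \<in> DerR" unfolding \<delta>1_def
    by (intro der_diff D der_sum der_cmult der_pv) (use zc in auto)
  have v1: "\<delta>1 (var k) = 0" for k
  proof -
    have "(\<Sum>j\<in>UNIV. z j * partial_var j (var k)) = (\<Sum>j\<in>UNIV. if j = k then z j else 0)"
      by (rule sum.cong) (auto simp: pv_var)
    also have "\<dots> = z k" by simp
    finally show ?thesis unfolding \<delta>1_def z_def by simp
  qed
  define dmu where "dmu \<mu> a = Poly_Mapping.lookup (\<delta>1 (Poly_Mapping.single 0 a)) \<mu>" for \<mu> a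
  have add1: "\<delta>1 (p + q) = \<delta>1 p + \<delta>1 q" for p q using derD(1)[OF d1] unfolding additive_def by blast
  have dmu_der: "dmu \<mu> \<in> derivations sc" for \<mu>
    unfolding derivations_def
  proof (intro CollectI conjI allI)
    show "dmu \<mu> (x + y) = dmu \<mu> x + dmu \<mu> y" for x y
      by (simp add: dmu_def single_add add1 lookup_add)
    show "dmu \<mu> (sc c x) = sc c (dmu \<mu> x)" for c x
    proof -
      have "\<delta>1 (Poly_Mapping.single 0 (sc c x)) = poly_scal sc c (\<delta>1 (Poly_Mapping.single 0 x))"
        using derD(2)[OF d1, of c "Poly_Mapping.single 0 x"] by simp
      then show ?thesis unfolding dmu_def poly_scal_def by (simp add: lookup_map0)
    qed
    show "dmu \<mu> (x * y) = dmu \<mu> x * y + x * dmu \<mu> y" for x y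
    proof -
      have "Poly_Mapping.single 0 (x * y) = Poly_Mapping.single 0 x * (Poly_Mapping.single 0 y :: ('n,'a) mpoly)"
        by (simp add: mult_single)
      then show ?thesis unfolding dmu_def
        by (simp add: derD(3)[OF d1] lookup_add lookup_mult_C_right lookup_mult_C_left)
    qed
  qed
  obtain S where S: "finite S" "subalg_gen sc S = UNIV" using fg unfolding finitely_generated_algebra_def by blast
  define F where "F = (\<Union>s\<in>S. Poly_Mapping.keys (\<delta>1 (Poly_Mapping.single 0 s)))"
  have finF: "finite F" unfolding F_def using S(1) by simp
  have kF: "Poly_Mapping.keys (\<delta>1 (Poly_Mapping.single 0 a)) \<subseteq> F" for a
  proof
    fix \<mu> assume \<mu>: "\<mu> \<in> Poly_Mapping.keys (\<delta>1 (Poly_Mapping.single 0 a))"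
    show "\<mu> \<in> F"
    proof (rule ccontr)
      assume nF: "\<mu> \<notin> F"
      have "dmu \<mu> s = 0" if "s \<in> S" for s
        using nF that unfolding F_def dmu_def by (auto simp: in_keys_iff)
      then have "dmu \<mu> a = 0"
        using der_vanish_gen[OF dmu_der, of S \<mu> a] S(2) by auto
      then show False using \<mu> unfolding dmu_def by (simp add: in_keys_iff)
    qed
  qed
  have ex: "\<forall>\<mu>. \<exists>x N. N \<in> M \<and> dmu \<mu> = (\<lambda>a. ad x a + N a)"
  proof
    fix \<mu>
    have "dmu \<mu> \<in> {(\<lambda>a. I a + N a) | I N. I \<in> inner_derivations \<and> N \<in> M}"
      using dmu_der dec by blast
    then show "\<exists>x N. N \<in> M \<and> dmu \<mu> = (\<lambda>a. ad x a + N a)"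
      unfolding inner_derivations_def by auto
  qed
  then obtain xf Nf where xN: "\<And>\<mu>. Nf \<mu> \<in> M" "\<And>\<mu>. dmu \<mu> = (\<lambda>a. ad (xf \<mu>) a + Nf \<mu> a)"
    by metis
  have N0: "Nf \<mu> 0 = 0" for \<mu>
    using additive_zero[OF der_additive] xN(1) Msub by blast
  have N1: "Nf \<mu> 1 = 0" for \<mu>
    using der_one xN(1) Msub by blast
  define x where "x = (\<Sum>\<mu>\<in>F. Poly_Mapping.single \<mu> (xf \<mu>) :: ('n,'a) mpoly)"
  define Nbar where "Nbar = (\<lambda>p. \<Sum>\<mu>\<in>F. Poly_Mapping.single \<mu> 1 * coeff_ext (Nf \<mu>) p :: ('n,'a) mpoly)"
  have Nbar_der: "Nbar \<in> DerR" unfolding Nbar_def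
    by (intro der_sum der_cmult Xm_center der_coeff_ext) (use xN(1) Msub in auto)
  have Nbar_span: "Nbar \<in> ext_span M"
  proof -
    obtain h where h: "bij_betw h {0..<card F} F" using ex_bij_betw_nat_finite[OF finF] by blast
    have "Nbar = (\<lambda>p. \<Sum>k<card F. Poly_Mapping.single (h k) 1 * coeff_ext (Nf (h k)) p)"
      unfolding Nbar_def lessThan_atLeast0
      by (rule ext, rule sum.reindex_bij_betw[OF h, symmetric])
    then show ?thesis unfolding ext_span_def
      by (intro CollectI exI[of _ "card F"] exI[of _ "\<lambda>k. Poly_Mapping.single (h k) 1"] exI[of _ "\<lambda>k. Nf (h k)"] conjI)
        (use xN(1) Xm_center in auto)
  qed
  have E_der: "(\<lambda>p. ad x p + Nbar p) \<in> DerR" by (intro der_add der_ad Nbar_der)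
  have eq1: "\<delta>1 = (\<lambda>p. ad x p + Nbar p)"
  proof (rule der_eq[OF d1 E_der v1])
    fix j :: 'n
    have vc: "(var j :: ('n,'a) mpoly) \<in> center" unfolding var_def by (rule Xm_center)
    have "ad x (var j) = 0" using vc unfolding ad_def center_def by simp
    moreover have "Nbar (var j) = 0"
      unfolding Nbar_def var_def by (simp add: coeff_ext_single N0 N1)
    ultimately show "ad x (var j) + Nbar (var j) = 0" by simp
  next
    fix a
    have "\<delta>1 (Poly_Mapping.single 0 a) = (\<Sum>\<mu>\<in>F. Poly_Mapping.single \<mu> (dmu \<mu> a))"
      unfolding dmu_def by (rule sum_single_superset[OF finF kF])
    also have "\<dots> = (\<Sum>\<mu>\<in>F. Poly_Mapping.single \<mu> (xf \<mu> * a) - Poly_Mapping.single \<mu> (a * xf \<mu>) + Poly_Mapping.single \<mu> (Nf \<mu> a))"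
      by (rule sum.cong) (auto simp: xN(2) ad_def single_add single_diff)
    also have "\<dots> = ad x (Poly_Mapping.single 0 a) + Nbar (Poly_Mapping.single 0 a)"
      unfolding ad_def x_def Nbar_def
      by (simp add: sum_distrib_right sum_distrib_left mult_single coeff_ext_single N0 sum.distrib sum_subtractf)
    finally show "\<delta>1 (Poly_Mapping.single 0 a) = ad x (Poly_Mapping.single 0 a) + Nbar (Poly_Mapping.single 0 a)" .
  qed
  have "\<delta> = (\<lambda>p. ad x p + Nbar p + (\<Sum>j\<in>UNIV. z j * partial_var j p))"
  proof
    fix p
    have "\<delta> p = \<delta>1 p + (\<Sum>j\<in>UNIV. z j * partial_var j p)" unfolding \<delta>1_def by simp
    then show "\<delta> p = ad x p + Nbar p + (\<Sum>j\<in>UNIV. z j * partial_var j p)" using eq1 by simp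
  qed
  then show ?thesis using Nbar_span zc unfolding inner_derivations_def by blast
qed

end


context kalg
begin

lemma main_unique:
  fixes I N :: "('n::finite,'a) mpoly \<Rightarrow> ('n,'a) mpoly" and z :: "'n \<Rightarrow> ('n,'a) mpoly"
  assumes Msub: "center_submodule_of_derivations sc M"
    and inter: "inner_derivations \<inter> M = {(\<lambda>a. 0)}"
    and I: "I \<in> inner_derivations" and N: "N \<in> ext_span M" and zc: "\<forall>j. z j \<in> center"
    and H: "(\<lambda>p. I p + N p + (\<Sum>j\<in>UNIV. z j * partial_var j p)) = (\<lambda>p. 0)"
  shows "I = (\<lambda>p. 0) \<and> N = (\<lambda>p. 0) \<and> (\<forall>j. (\<lambda>p. z j * partial_var j p) = (\<lambda>p. 0))"
proof -
  have Mder: "M \<subseteq> derivations sc" using Msub unfolding center_submodule_of_derivations_def by blast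
  obtain x where x: "I = ad x" using I unfolding inner_derivations_def by blast
  obtain n and zk :: "nat \<Rightarrow> ('n,'a) mpoly" and Ds where Nd: "N = (\<lambda>p. \<Sum>k<n. zk k * coeff_ext (Ds k) p)"
    and c: "\<forall>k<n. zk k \<in> center \<and> Ds k \<in> M"
    using N unfolding ext_span_def by auto
  have D0: "Ds k 0 = 0" "Ds k 1 = 0" if "k < n" for k
    using c that Mder additive_zero[OF der_additive] der_one by blast+
  have Hp: "I p + N p + (\<Sum>j\<in>UNIV. z j * partial_var j p) = 0" for p
    using fun_cong[OF H] by simp
  have z0: "z j = 0" for j
  proof -
    have vc: "(var j :: ('n,'a) mpoly) \<in> center" unfolding var_def by (rule Xm_center)
    have "I (var j) = 0" using vc unfolding x ad_def center_def by simp
    moreover have "N (var j) = 0"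
      unfolding Nd var_def by (intro sum.neutral ballI) (simp add: coeff_ext_single D0)
    moreover have "(\<Sum>i\<in>UNIV. z i * partial_var i (var j)) = (\<Sum>i\<in>UNIV. if i = j then z i else 0)"
      by (rule sum.cong) (auto simp: pv_var)
    ultimately show ?thesis using Hp[of "var j"] by simp
  qed
  have Hp2: "I p + N p = 0" for p using Hp[of p] by (simp add: z0)
  have xc: "Poly_Mapping.lookup x \<mu> \<in> center" for \<mu>
  proof -
    define Nmu where "Nmu = (\<lambda>a. \<Sum>k<n. Poly_Mapping.lookup (zk k) \<mu> * Ds k a)"
    have NmuM: "Nmu \<in> M" unfolding Nmu_def
      by (rule M_sum[OF Msub]) (use c in \<open>auto simp: center_char\<close>)
    have m1: "(\<lambda>a. (-1) * Nmu a) \<in> M"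
    proof -
      have "(-1::'a) \<in> center" by (simp add: center_def)
      then show ?thesis using Msub NmuM unfolding center_submodule_of_derivations_def by blast
    qed
    have eqa: "ad (Poly_Mapping.lookup x \<mu>) a = (-1) * Nmu a" for a
    proof -
      have "Poly_Mapping.lookup (I (Poly_Mapping.single 0 a) + N (Poly_Mapping.single 0 a)) \<mu> = 0"
        by (simp add: Hp2)
      moreover have "Poly_Mapping.lookup (I (Poly_Mapping.single 0 a)) \<mu> = ad (Poly_Mapping.lookup x \<mu>) a"
        unfolding x ad_def by (simp add: lookup_minus lookup_mult_C_right lookup_mult_C_left)
      moreover have "Poly_Mapping.lookup (N (Poly_Mapping.single 0 a)) \<mu> = Nmu a"
        unfolding Nd Nmu_def lookup_sum
        by (rule sum.cong) (simp_all add: coeff_ext_single D0 lookup_mult_C_right)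
      ultimately show ?thesis by (simp add: lookup_add add_eq_0_iff)
    qed
    have "ad (Poly_Mapping.lookup x \<mu>) = (\<lambda>a. (-1) * Nmu a)" using eqa by (rule ext)
    then have "ad (Poly_Mapping.lookup x \<mu>) \<in> M" using m1 by simp
    then have "ad (Poly_Mapping.lookup x \<mu>) \<in> inner_derivations \<inter> M"
      unfolding inner_derivations_def by simp
    then have "ad (Poly_Mapping.lookup x \<mu>) = (\<lambda>a. 0)" using inter by blast
    then show ?thesis unfolding center_def ad_def by (auto dest: fun_cong)
  qed
  have "x \<in> center" by (rule center_charI[OF xc])
  then have I0: "I = (\<lambda>p. 0)" unfolding x ad_def center_def by auto
  have "N = (\<lambda>p. 0)" using Hp2 I0 by (auto intro!: ext dest: fun_cong)
  with I0 z0 show ?thesis by simp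
qed

end

theorem theorem2p1:
  fixes sc :: "'k::field_char_0 \<Rightarrow> 'a::ring_1 \<Rightarrow> 'a"
    and M :: "('a \<Rightarrow> 'a) set"
  assumes alg: "K_algebra sc"
  shows "(center :: ('n::finite, 'a) mpoly set) = {p. \<forall>\<mu>. Poly_Mapping.lookup p \<mu> \<in> center}
    \<and> (finitely_generated_algebra sc \<and>
         center_submodule_of_derivations sc M \<and>
         derivations sc = {(\<lambda>a. I a + N a) | I N. I \<in> inner_derivations \<and> N \<in> M} \<and>
         inner_derivations \<inter> M = {(\<lambda>a. 0)}
         \<longrightarrow>
         derivations (poly_scal sc) =
           {(\<lambda>p. I p + N p + (\<Sum>j\<in>(UNIV :: 'n set). z j * partial_var j p)) | I N z.
              I \<in> inner_derivations \<and> N \<in> ext_span M \<and> (\<forall>j. z j \<in> center)}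
         \<and> (\<forall>I N (z :: 'n \<Rightarrow> ('n, 'a) mpoly).
              I \<in> inner_derivations \<and> N \<in> ext_span M \<and> (\<forall>j. z j \<in> center) \<and>
              (\<lambda>p. I p + N p + (\<Sum>j\<in>UNIV. z j * partial_var j p)) = (\<lambda>p. 0)
              \<longrightarrow> I = (\<lambda>p. 0) \<and> N = (\<lambda>p. 0) \<and> (\<forall>j. (\<lambda>p. z j * partial_var j p) = (\<lambda>p. 0))))"
proof -
  interpret kalg sc by (rule kalg.intro[OF alg])
  have part1: "(center :: ('n::finite, 'a) mpoly set) = {p. \<forall>\<mu>. Poly_Mapping.lookup p \<mu> \<in> center}"
    using center_char by blast
  show ?thesis
  proof (intro conjI impI part1)
    assume h: "finitely_generated_algebra sc \<and> center_submodule_of_derivations sc M \<and>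
         derivations sc = {(\<lambda>a. I a + N a) | I N. I \<in> inner_derivations \<and> N \<in> M} \<and>
         inner_derivations \<inter> M = {(\<lambda>a. 0)}"
    then have Mder: "M \<subseteq> derivations sc" unfolding center_submodule_of_derivations_def by blast
    show "derivations (poly_scal sc) =
           {(\<lambda>p. I p + N p + (\<Sum>j\<in>(UNIV :: 'n set). z j * partial_var j p)) | I N z.
              I \<in> inner_derivations \<and> N \<in> ext_span M \<and> (\<forall>j. z j \<in> center)}"
    proof
      show "derivations (poly_scal sc) \<subseteq> {(\<lambda>p. I p + N p + (\<Sum>j\<in>(UNIV :: 'n set). z j * partial_var j p)) | I N z.
              I \<in> inner_derivations \<and> N \<in> ext_span M \<and> (\<forall>j. z j \<in> center)}"
      proof
        fix \<delta> :: "('n,'a) mpoly \<Rightarrow> ('n,'a) mpoly"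
        assume "\<delta> \<in> derivations (poly_scal sc)"
        from main_decomp[OF _ Mder _ this] h show "\<delta> \<in> {(\<lambda>p. I p + N p + (\<Sum>j\<in>(UNIV :: 'n set). z j * partial_var j p)) | I N z.
              I \<in> inner_derivations \<and> N \<in> ext_span M \<and> (\<forall>j. z j \<in> center)}"
          by blast
      qed
    next
      show "{(\<lambda>p. I p + N p + (\<Sum>j\<in>(UNIV :: 'n set). z j * partial_var j p)) | I N z.
              I \<in> inner_derivations \<and> N \<in> ext_span M \<and> (\<forall>j. z j \<in> center)} \<subseteq> derivations (poly_scal sc)"
        using main_sup[OF Mder] by blast
    qed
    show "\<forall>I N (z :: 'n \<Rightarrow> ('n, 'a) mpoly).
              I \<in> inner_derivations \<and> N \<in> ext_span M \<and> (\<forall>j. z j \<in> center) \<and>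
              (\<lambda>p. I p + N p + (\<Sum>j\<in>UNIV. z j * partial_var j p)) = (\<lambda>p. 0)
              \<longrightarrow> I = (\<lambda>p. 0) \<and> N = (\<lambda>p. 0) \<and> (\<forall>j. (\<lambda>p. z j * partial_var j p) = (\<lambda>p. 0))"
      using main_unique h by blast
  qed
qed

end
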